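(* Let $n\ge1$, $\varepsilon\in D$, $s\in D^n$, and let $\rho^{(j)},\ell_j,\Delta_j,e_j,j',p(j)$ be defined by the recursion below. Then for every $0\le j\le n$: $\rho^{(j)}_0\neq0$, $\deg\rho^{(j)}\le\ell_j$, $(\rho^{(j)},\ell_j)\in\mathrm{Rp}(s^{(j)})$, and $x^{\ell_j-\deg\rho^{(j)}}\big(\rho^{(j)}\big)^{*}\in\mathrm{Min}(s^{(j)})$; in particular $\ell_j=L(s^{(j)})$. Moreover, for $j\ge1$: if $\Delta_j=0$ then $\ell_j=\ell_{j-1}$ and $e_j=e_{j-1}+1$; if $\Delta_j\neq0$ then $\ell_j=\max\{e_{j-1},0\}+\ell_{j-1}=j'+1-\ell_{j'}$ and $e_j=-|e_{j-1}|+1$.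
   Context: Let $D$ be a commutative integral domain with $1\neq 0$. For nonzero $f\in D[x]$, $f^{*}(x)=x^{\deg f}f(x^{-1})$. For $s=(s_1,\dots,s_n)\in D^n$ let $s^{(i)}=(s_1,\dots,s_i)$, $\overline{s}=s_1x+\cdots+s_nx^n$, $\underline{s}=s_1x^{-1}+\cdots+s_nx^{-n}\in D[x,x^{-1}]$, and $F_k$ the coefficient of $x^k$ in a Laurent polynomial $F$. A polynomial $f$ is an annihilator of $s$ if $f=0$ or $d=\deg f\ge0$ and $(f\cdot\underline{s})_{d-j}=0$ for $d+1\le j\le n$; $\mathrm{Min}(s)$ is the set of nonzero annihilators of least degree and $L(s)$ that degree. A reciprocal pair for $s$ is $(g,\ell)$ with $g\in D[x]$, $0\le\ell\le n$, $g_0\neq0$, $\deg g\le\ell$, and $\sum_{k=0}^{\deg g}g_ks_{j-k}=0$ for $\ell+1\le j\le n$; $\mathrm{Rp}(s)$ is the set of these. Recursion (relative to fixed $\varepsilon\in D$): $\rho^{(-1)}=\varepsilon$, $\rho^{(0)}=1$, $\ell_{-1}=\ell_0=0$, $\Delta_0=1$, $0'=-1$, $p(0)=1$, and $e_j=j+1-2\ell_j$ for $j\ge0$. For $j=1,\dots,n$ successively: $\Delta_j=(\rho^{(j-1)}\cdot\overline{s})_j=\sum_{k=0}^{\deg\rho^{(j-1)}}\rho^{(j-1)}_ks_{j-k}$; $j'=(j-1)'$ if $\Delta_j=0$ or $e_{j-1}\le0$, and $j'=j-1$ if $\Delta_j\neq0$ and $e_{j-1}>0$; $p(j)=j-j'$;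 $\Delta'_j=\Delta_{(j-1)'+1}$; $\ell_j=\ell_{j-1}$ if $\Delta_j=0$ or $e_{j-1}\le0$, and $\ell_j=j-\ell_{j-1}$ otherwise; $\rho^{(j)}=\rho^{(j-1)}$ if $\Delta_j=0$, and otherwise $\rho^{(j)}=\Delta'_j\,\rho^{(j-1)}-\Delta_j\,x^{p(j-1)}\rho^{((j-1)')}$. *)

theory Defs
  imports "HOL-Computational_Algebra.Polynomial"
begin

text \<open>A sequence s in D^n is a function nat => 'a of which only s 1, ..., s n matter;
  its prefix s^(i) is the same function considered with length i.\<close>

text \<open>Coefficient of x^m (m an integer) in the Laurent polynomial f * (s_1 x^-1 + ... + s_n x^-n).\<close>
definition lcoeff_under :: "'a::comm_ring_1 poly \<Rightarrow> nat \<Rightarrow> (nat \<Rightarrow> 'a) \<Rightarrow> int \<Rightarrow> 'a" where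
  "lcoeff_under f n s m =
     (\<Sum>k=0..degree f. \<Sum>i=1..n. if int k - int i = m then coeff f k * s i else 0)"

text \<open>Coefficient of x^m in the polynomial f * (s_1 x + ... + s_n x^n).\<close>
definition coeff_over :: "'a::comm_ring_1 poly \<Rightarrow> nat \<Rightarrow> (nat \<Rightarrow> 'a) \<Rightarrow> nat \<Rightarrow> 'a" where
  "coeff_over f n s m =
     (\<Sum>k=0..degree f. \<Sum>i=1..n. if k + i = m then coeff f k * s i else 0)"

definition is_annihilator :: "nat \<Rightarrow> (nat \<Rightarrow> 'a::comm_ring_1) \<Rightarrow> 'a poly \<Rightarrow> bool" where
  "is_annihilator n s f \<longleftrightarrow>
     f = 0 \<or> (\<forall>j. degree f + 1 \<le> j \<and> j \<le> n \<longrightarrow> lcoeff_under f n s (int (degree f) - int j) = 0)"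

definition MinSet :: "nat \<Rightarrow> (nat \<Rightarrow> 'a::comm_ring_1) \<Rightarrow> 'a poly set" where
  "MinSet n s = {f. f \<noteq> 0 \<and> is_annihilator n s f \<and>
      (\<forall>g. g \<noteq> 0 \<and> is_annihilator n s g \<longrightarrow> degree f \<le> degree g)}"

definition Lc :: "nat \<Rightarrow> (nat \<Rightarrow> 'a::comm_ring_1) \<Rightarrow> nat" where
  "Lc n s = (LEAST d. \<exists>f. f \<noteq> 0 \<and> is_annihilator n s f \<and> degree f = d)"

definition Rp :: "nat \<Rightarrow> (nat \<Rightarrow> 'a::comm_ring_1) \<Rightarrow> ('a poly \<times> nat) set" where
  "Rp n s = {(g, l). l \<le> n \<and> coeff g 0 \<noteq> 0 \<and> degree g \<le> l \<and>
      (\<forall>j. l + 1 \<le> j \<and> j \<le> n \<longrightarrow> (\<Sum>k=0..degree g. coeff g k * s (j - k)) = 0)}"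

text \<open>State after step j:
  (rho^(j), rho^(j'), l_j, j', Delta_{j'+1}), where j' is an integer (0' = -1)
  and rho^(-1) = eps, Delta_0 = 1.\<close>
fun bm_state :: "'a::idom \<Rightarrow> nat \<Rightarrow> (nat \<Rightarrow> 'a) \<Rightarrow> nat \<Rightarrow> 'a poly \<times> 'a poly \<times> nat \<times> int \<times> 'a" where
  "bm_state eps n s 0 = (1, [:eps:], 0, -1, 1)"
| "bm_state eps n s (Suc i) =
     (let (r, rp, l, jp, dp) = bm_state eps n s i;
          j = Suc i;
          dlt = coeff_over r n s j;
          e = int i + 1 - 2 * int l;
          jump = (dlt \<noteq> 0 \<and> e > 0);
          p = nat (int i - jp);
          r' = (if dlt = 0 then r else smult dp r - smult dlt (monom 1 p * rp));
          l' = (if jump then j - l else l);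
          jp' = (if jump then int i else jp);
          rp' = (if jump then r else rp);
          dp' = (if jump then dlt else dp)
      in (r', rp', l', jp', dp'))"

definition rho :: "'a::idom \<Rightarrow> nat \<Rightarrow> (nat \<Rightarrow> 'a) \<Rightarrow> nat \<Rightarrow> 'a poly" where
  "rho eps n s j = fst (bm_state eps n s j)"

definition ell :: "'a::idom \<Rightarrow> nat \<Rightarrow> (nat \<Rightarrow> 'a) \<Rightarrow> nat \<Rightarrow> nat" where
  "ell eps n s j = fst (snd (snd (bm_state eps n s j)))"

definition ell_int :: "'a::idom \<Rightarrow> nat \<Rightarrow> (nat \<Rightarrow> 'a) \<Rightarrow> int \<Rightarrow> nat" where
  "ell_int eps n s i = (if i < 0 then 0 else ell eps n s (nat i))"

definition jprime :: "'a::idom \<Rightarrow> nat \<Rightarrow> (nat \<Rightarrow> 'a) \<Rightarrow> nat \<Rightarrow> int" where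
  "jprime eps n s j = fst (snd (snd (snd (bm_state eps n s j))))"

definition Delta :: "'a::idom \<Rightarrow> nat \<Rightarrow> (nat \<Rightarrow> 'a) \<Rightarrow> nat \<Rightarrow> 'a" where
  "Delta eps n s j = (if j = 0 then 1 else coeff_over (rho eps n s (j - 1)) n s j)"

definition ee :: "'a::idom \<Rightarrow> nat \<Rightarrow> (nat \<Rightarrow> 'a) \<Rightarrow> nat \<Rightarrow> int" where
  "ee eps n s j = int j + 1 - 2 * int (ell eps n s j)"

end

theory Submission
  imports Defs
begin



definition Sp :: "nat \<Rightarrow> (nat \<Rightarrow> 'a::comm_ring_1) \<Rightarrow> 'a poly" where
  "Sp n s = (\<Sum>i\<in>{1..n}. monom (s i) i)"

lemma coeff_Sp: "coeff (Sp n s) i = (if 1 \<le> i \<and> i \<le> n then s i else 0)"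
  unfolding Sp_def by (simp add: coeff_sum coeff_monom)

lemma coeff_mult_Sp:
  assumes "t \<le> n"
  shows "coeff (r * Sp n s) t = (\<Sum>k<t. coeff r k * s (t - k))"
proof -
  have "coeff (r * Sp n s) t = (\<Sum>k\<le>t. coeff r k * coeff (Sp n s) (t - k))"
    by (simp add: coeff_mult)
  also have "\<dots> = (\<Sum>k<t. coeff r k * coeff (Sp n s) (t - k))"
    by (simp add: lessThan_Suc_atMost[symmetric] coeff_Sp)
  also have "\<dots> = (\<Sum>k<t. coeff r k * s (t - k))"
    using assms by (intro sum.cong) (auto simp: coeff_Sp)
  finally show ?thesis .
qed

lemma coeff_over_eq:
  assumes "t \<le> n"
  shows "coeff_over r n s t = coeff (r * Sp n s) t"
proof -
  let ?g = "\<lambda>k. if k < t then coeff r k * s (t - k) else 0"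
  have inner: "(\<Sum>i=1..n. if k + i = t then coeff r k * s i else 0) = ?g k" for k
  proof -
    have "(\<Sum>i=1..n. if k + i = t then coeff r k * s i else 0)
        = (\<Sum>i\<in>{1..n}. if i = t - k \<and> k < t then coeff r k * s i else 0)"
      by (intro sum.cong) auto
    also have "\<dots> = ?g k" using assms
      by (cases "k < t") (auto simp: sum.delta)
    finally show ?thesis .
  qed
  have "coeff_over r n s t = (\<Sum>k=0..degree r. ?g k)"
    unfolding coeff_over_def using inner by simp
  also have "\<dots> = (\<Sum>k\<in>{..<degree r + t + 1}. ?g k)"
    by (intro sum.mono_neutral_left) (auto simp: coeff_eq_0)
  also have "\<dots> = (\<Sum>k<t. ?g k)"
    by (intro sum.mono_neutral_right) auto
  also have "\<dots> = (\<Sum>k<t. coeff r k * s (t - k))" by simp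
  also have "\<dots> = coeff (r * Sp n s) t" by (rule coeff_mult_Sp[OF assms, symmetric])
  finally show ?thesis .
qed

lemma Rp_sum_eq:
  assumes "degree g < j" "j \<le> n"
  shows "(\<Sum>k=0..degree g. coeff g k * s (j - k)) = coeff (g * Sp n s) j"
  unfolding coeff_mult_Sp[OF assms(2)] using assms
  by (intro sum.mono_neutral_left) (auto simp: coeff_eq_0)

lemma lcoeff_eq:
  fixes f :: "'a::comm_ring_1 poly"
  assumes "degree f < j" "j \<le> N" "N \<le> n"
  shows "lcoeff_under f N s (int (degree f) - int j) = coeff (reflect_poly f * Sp n s) j"
proof -
  let ?d = "degree f"
  have inner: "(\<Sum>i=1..N. if int k - int i = int ?d - int j then coeff f k * s i else 0)
      = coeff f k * s (k + j - ?d)" if "k \<le> ?d" for k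
  proof -
    have "(\<Sum>i=1..N. if int k - int i = int ?d - int j then coeff f k * s i else 0)
        = (\<Sum>i\<in>{1..N}. if i = k + j - ?d then coeff f k * s i else 0)"
      using that assms by (intro sum.cong) auto
    also have "\<dots> = coeff f k * s (k + j - ?d)"
    proof -
      have "k + j - ?d \<in> {1..N}" using that assms by auto
      then show ?thesis using sum.delta[of "{1..N}" "k + j - ?d" "\<lambda>i. coeff f k * s i"] by simp
    qed
    finally show ?thesis .
  qed
  have "lcoeff_under f N s (int ?d - int j) = (\<Sum>k=0..?d. coeff f k * s (k + j - ?d))"
    unfolding lcoeff_under_def using inner by (intro sum.cong) auto
  also have "\<dots> = (\<Sum>m=0..?d. coeff f (?d - m) * s (j - m))"
    using assms by (subst sum.atLeastAtMost_rev) (intro sum.cong, auto simp: algebra_simps)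
  also have "\<dots> = (\<Sum>m<j. coeff (reflect_poly f) m * s (j - m))"
    using assms by (intro sum.mono_neutral_cong_left) (auto simp: coeff_reflect_poly)
  also have "\<dots> = coeff (reflect_poly f * Sp n s) j"
    using assms by (simp add: coeff_mult_Sp)
  finally show ?thesis .
qed

lemma annih_iff:
  fixes f :: "'a::comm_ring_1 poly"
  assumes "f \<noteq> 0" "N \<le> n"
  shows "is_annihilator N s f \<longleftrightarrow>
    (\<forall>t. degree f < t \<and> t \<le> N \<longrightarrow> coeff (reflect_poly f * Sp n s) t = 0)"
  unfolding is_annihilator_def using assms lcoeff_eq[of f _ N n s]
  by (auto simp: Suc_le_eq)

lemma reflect_monom1: "reflect_poly (monom (1::'a::comm_ring_1) a) = 1"
  by (rule poly_eqI) (auto simp: coeff_reflect_poly degree_monom_eq coeff_monom)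

lemma massey:
  fixes g h S :: "'a::idom poly"
  assumes g0: "coeff g 0 \<noteq> 0" and gd: "degree g \<le> d"
    and ga: "\<forall>t. d < t \<and> t \<le> N \<longrightarrow> coeff (g * S) t = 0"
    and hd: "degree h \<le> l"
    and ha: "\<forall>t. l < t \<and> t < N \<longrightarrow> coeff (h * S) t = 0"
    and hN: "coeff (h * S) N \<noteq> 0"
  shows "N \<le> d + l"
proof (rule ccontr)
  assume "\<not> N \<le> d + l"
  hence lt: "d + l < N" by simp
  have A: "coeff (h * (g * S)) N = 0"
    unfolding coeff_mult[of h]
  proof (intro sum.neutral ballI)
    fix a assume "a \<in> {..N}"
    show "coeff h a * coeff (g * S) (N - a) = 0"
    proof (cases "a \<le> l")
      case True thus ?thesis using ga lt \<open>a \<in> {..N}\<close> by auto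
    next
      case False thus ?thesis using hd by (simp add: coeff_eq_0)
    qed
  qed
  have "coeff (g * (h * S)) N = (\<Sum>b\<le>N. coeff g b * coeff (h * S) (N - b))"
    by (simp add: coeff_mult)
  also have "\<dots> = (\<Sum>b\<le>N. if b = 0 then coeff g 0 * coeff (h * S) N else 0)"
  proof (intro sum.cong refl)
    fix b assume "b \<in> {..N}"
    show "coeff g b * coeff (h * S) (N - b) = (if b = 0 then coeff g 0 * coeff (h * S) N else 0)"
    proof (cases "b = 0")
      case True thus ?thesis by simp
    next
      case False
      show ?thesis
      proof (cases "b \<le> d")
        case True thus ?thesis using ha lt False \<open>b \<in> {..N}\<close> by auto
      next
        case False' : False thus ?thesis using gd False by (simp add: coeff_eq_0)
      qed
    qed
  qed
  also have "\<dots> = coeff g 0 * coeff (h * S) N" by (simp add: sum.delta)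
  finally have B: "coeff (g * (h * S)) N = coeff g 0 * coeff (h * S) N" .
  have "h * (g * S) = g * (h * S)" by (simp add: ac_simps)
  with A B g0 hN show False by simp
qed

definition inv :: "'a::idom \<Rightarrow> nat \<Rightarrow> (nat \<Rightarrow> 'a) \<Rightarrow> nat \<Rightarrow> bool" where
 "inv eps n s i \<longleftrightarrow> (case bm_state eps n s i of (r, rp, l, jp, dp) \<Rightarrow>
   coeff r 0 \<noteq> 0 \<and> degree r \<le> l \<and> l \<le> i \<and>
   (\<forall>t. l < t \<and> t \<le> i \<longrightarrow> coeff (r * Sp n s) t = 0) \<and>
   (\<forall>f. f \<noteq> 0 \<and> is_annihilator i s f \<longrightarrow> l \<le> degree f) \<and>
   -1 \<le> jp \<and> jp < int i \<and> dp \<noteq> 0 \<and>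
   int l = jp + 1 - int (ell_int eps n s jp) \<and>
   (jp = -1 \<longrightarrow> degree rp = 0) \<and>
   (0 \<le> jp \<longrightarrow> coeff rp 0 \<noteq> 0 \<and> degree rp \<le> ell eps n s (nat jp) \<and>
      (\<forall>t. ell eps n s (nat jp) < t \<and> t \<le> nat jp \<longrightarrow> coeff (rp * Sp n s) t = 0) \<and>
      coeff (rp * Sp n s) (nat jp + 1) = dp))"

lemma inv_0: "inv eps n s 0"
  by (simp add: inv_def ell_int_def)

lemma lin_coeff:
  fixes x y S :: "'a::comm_ring_1 poly"
  shows "coeff ((smult a x - smult b (monom 1 p * y)) * S) t
     = a * coeff (x * S) t - b * (if t < p then 0 else coeff (y * S) (t - p))"
proof -
  have "(smult a x - smult b (monom 1 p * y)) * S = smult a (x * S) - smult b (monom 1 p * (y * S))"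
    by (simp add: algebra_simps)
  thus ?thesis by (simp add: coeff_monom_mult)
qed

lemma inv_step:
  fixes eps :: "'a::idom"
  assumes I: "inv eps n s i" and iN: "Suc i \<le> n"
  shows "inv eps n s (Suc i)"
proof -
  obtain r rp l jp dp where st: "bm_state eps n s i = (r, rp, l, jp, dp)"
    by (metis prod_cases5)
  define S where "S = Sp n s"
  from I have r0: "coeff r 0 \<noteq> 0" and rdeg: "degree r \<le> l" and li: "l \<le> i"
    and rann: "\<forall>t. l < t \<and> t \<le> i \<longrightarrow> coeff (r * S) t = 0"
    and rmin: "\<forall>f. f \<noteq> 0 \<and> is_annihilator i s f \<longrightarrow> l \<le> degree f"
    and jpb: "-1 \<le> jp" "jp < int i" and dp0: "dp \<noteq> 0"
    and lrel: "int l = jp + 1 - int (ell_int eps n s jp)"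
    and jpm1: "jp = -1 \<longrightarrow> degree rp = 0"
    and jppos: "0 \<le> jp \<longrightarrow> coeff rp 0 \<noteq> 0 \<and> degree rp \<le> ell eps n s (nat jp) \<and>
      (\<forall>t. ell eps n s (nat jp) < t \<and> t \<le> nat jp \<longrightarrow> coeff (rp * S) t = 0) \<and>
      coeff (rp * S) (nat jp + 1) = dp"
    unfolding inv_def st S_def by auto
  have elli: "ell eps n s i = l" by (simp add: ell_def st)
  define dlt where "dlt = coeff_over r n s (Suc i)"
  have dlt_eq: "dlt = coeff (r * S) (Suc i)"
    unfolding dlt_def S_def using iN by (rule coeff_over_eq)
  define e where "e = int i + 1 - 2 * int l"
  define jump where "jump = (dlt \<noteq> 0 \<and> e > 0)"
  define p where "p = nat (int i - jp)"
  define r' where "r' = (if dlt = 0 then r else smult dp r - smult dlt (monom 1 p * rp))"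
  define l' where "l' = (if jump then Suc i - l else l)"
  define jp' where "jp' = (if jump then int i else jp)"
  define rp' where "rp' = (if jump then r else rp)"
  define dp' where "dp' = (if jump then dlt else dp)"
  have st': "bm_state eps n s (Suc i) = (r', rp', l', jp', dp')"
    by (simp add: st Let_def dlt_def e_def jump_def p_def r'_def l'_def jp'_def rp'_def dp'_def)
  have p1: "1 \<le> p" using jpb by (simp add: p_def)
  have ll': "l \<le> l'" using li by (auto simp: l'_def jump_def e_def)
  have l'i: "l' \<le> Suc i" using li by (auto simp: l'_def)
  have l'ge: "dlt \<noteq> 0 \<Longrightarrow> Suc i \<le> l' + l" using li by (auto simp: l'_def jump_def e_def)
  have key: "dlt \<noteq> 0 \<Longrightarrow> 0 \<le> jp \<Longrightarrow> p + ell eps n s (nat jp) + l = Suc i"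
    using lrel jpb by (simp add: p_def ell_int_def)
  have jm1: "jp = -1 \<Longrightarrow> l = 0" using lrel by (simp add: ell_int_def)
  have c1: "coeff r' 0 \<noteq> 0"
    using r0 dp0 p1 by (simp add: r'_def coeff_monom_mult)
  have c2: "degree r' \<le> l'"
  proof (cases "dlt = 0")
    case True thus ?thesis using rdeg ll' by (simp add: r'_def)
  next
    case False
    have d1: "degree (smult dp r) \<le> l'" using rdeg ll' by (meson degree_smult_le order_trans)
    have "degree (monom (1::'a) p * rp) \<le> p + degree rp"
      using degree_mult_le[of "monom (1::'a) p" rp] degree_monom_le[of "1::'a" p] by linarith
    also have "\<dots> \<le> l'"
    proof (cases "jp = -1")
      case True
      thus ?thesis using jpm1 jm1 False by (simp add: p_def l'_def jump_def e_def)
    next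
      case nj: False
      hence "0 \<le> jp" using jpb by simp
      thus ?thesis using jppos key[OF False] False li
        by (auto simp: l'_def jump_def e_def)
    qed
    finally have d2: "degree (smult dlt (monom (1::'a) p * rp)) \<le> l'"
      by (meson degree_smult_le order_trans)
    have "degree (smult dp r - smult dlt (monom (1::'a) p * rp)) \<le> l'"
      by (rule degree_diff_le[OF d1 d2])
    thus ?thesis using False unfolding r'_def by simp
  qed
  have c4: "\<forall>t. l' < t \<and> t \<le> Suc i \<longrightarrow> coeff (r' * S) t = 0"
  proof (intro allI impI)
    fix t assume t: "l' < t \<and> t \<le> Suc i"
    show "coeff (r' * S) t = 0"
    proof (cases "dlt = 0")
      case True
      thus ?thesis using t rann ll' dlt_eq by (cases "t = Suc i") (auto simp: r'_def)
    next
      case False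
      have jp0: "0 \<le> jp"
      proof (rule ccontr)
        assume "\<not> 0 \<le> jp"
        hence "jp = -1" using jpb by simp
        hence "l' = Suc i" using jm1 False by (simp add: l'_def jump_def e_def)
        with t show False by linarith
      qed
      define m where "m = nat jp"
      have pm: "p = i - m" "m < i" using jpb jp0 by (auto simp: p_def m_def)
      have lmb: "p + ell eps n s m + l = Suc i" using key[OF False jp0] by (simp add: m_def)
      have rpA: "\<forall>t. ell eps n s m < t \<and> t \<le> m \<longrightarrow> coeff (rp * S) t = 0"
        and rpN: "coeff (rp * S) (m + 1) = dp" using jppos jp0 by (auto simp: m_def)
      have "coeff (r' * S) t = dp * coeff (r * S) t - dlt * (if t < p then 0 else coeff (rp * S) (t - p))"
        using False by (simp add: r'_def lin_coeff)
      also have "\<dots> = 0"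
      proof (cases "t = Suc i")
        case True
        have "Suc i - p = m + 1" using pm by simp
        thus ?thesis using True pm rpN dlt_eq by simp
      next
        case tF: False
        have "coeff (r * S) t = 0" using rann t tF ll' by auto
        moreover have "\<not> t < p" "ell eps n s m < t - p \<and> t - p \<le> m"
          using t tF l'ge[OF False] lmb pm by auto
        moreover have "coeff (rp * S) (t - p) = 0" using calculation(3) rpA by blast
        ultimately show ?thesis by simp
      qed
      finally show ?thesis .
    qed
  qed
  have c5: "\<forall>f. f \<noteq> 0 \<and> is_annihilator (Suc i) s f \<longrightarrow> l' \<le> degree f"
  proof (intro allI impI)
    fix f :: "'a poly" assume f: "f \<noteq> 0 \<and> is_annihilator (Suc i) s f"
    have fa: "\<forall>t. degree f < t \<and> t \<le> Suc i \<longrightarrow> coeff (reflect_poly f * S) t = 0"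
      using f annih_iff[of f "Suc i" n s] iN by (simp add: S_def)
    hence "is_annihilator i s f" using f annih_iff[of f i n s] iN by (simp add: S_def)
    hence lf: "l \<le> degree f" using rmin f by blast
    show "l' \<le> degree f"
    proof (cases "dlt = 0")
      case True thus ?thesis using lf by (simp add: l'_def jump_def)
    next
      case False
      have "Suc i \<le> degree f + l"
      proof (rule massey[of "reflect_poly f" "degree f" "Suc i" S r l])
        show "coeff (reflect_poly f) 0 \<noteq> 0" using f by simp
        show "degree (reflect_poly f) \<le> degree f" by (rule degree_reflect_poly_le)
        show "\<forall>t. degree f < t \<and> t \<le> Suc i \<longrightarrow> coeff (reflect_poly f * S) t = 0" by (rule fa)
        show "degree r \<le> l" by (rule rdeg)
        show "\<forall>t. l < t \<and> t < Suc i \<longrightarrow> coeff (r * S) t = 0" using rann by auto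
        show "coeff (r * S) (Suc i) \<noteq> 0" using False dlt_eq by simp
      qed
      thus ?thesis using lf by (auto simp: l'_def)
    qed
  qed
  have c7: "int l' = jp' + 1 - int (ell_int eps n s jp')"
    using lrel li by (auto simp: l'_def jp'_def ell_int_def elli)
  have c9: "0 \<le> jp' \<longrightarrow> coeff rp' 0 \<noteq> 0 \<and> degree rp' \<le> ell eps n s (nat jp') \<and>
      (\<forall>t. ell eps n s (nat jp') < t \<and> t \<le> nat jp' \<longrightarrow> coeff (rp' * S) t = 0) \<and>
      coeff (rp' * S) (nat jp' + 1) = dp'"
    using jppos r0 rdeg rann dlt_eq by (auto simp: jp'_def rp'_def dp'_def elli)
  show ?thesis
    unfolding inv_def st' S_def[symmetric] prod.case
    using c1 c2 l'i c4 c5 c7 c9 jpb jpm1 dp0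
    by (auto simp: jp'_def rp'_def dp'_def jump_def)
qed

lemma inv_all: "j \<le> n \<Longrightarrow> inv eps n s j"
  by (induction j) (auto intro: inv_step simp: inv_0)

lemma part1:
  fixes eps :: "'a::idom"
  assumes jn: "j \<le> n"
  shows "coeff (rho eps n s j) 0 \<noteq> 0 \<and>
            degree (rho eps n s j) \<le> ell eps n s j \<and>
            (rho eps n s j, ell eps n s j) \<in> Rp j s \<and>
            monom 1 (ell eps n s j - degree (rho eps n s j)) * reflect_poly (rho eps n s j)
              \<in> MinSet j s \<and>
            ell eps n s j = Lc j s"
proof -
  obtain r rp l jp dp where st: "bm_state eps n s j = (r, rp, l, jp, dp)"
    by (metis prod_cases5)
  have I: "inv eps n s j" using jn by (rule inv_all)
  define S where "S = Sp n s"
  from I have r0: "coeff r 0 \<noteq> 0" and rdeg: "degree r \<le> l" and lj: "l \<le> j"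
    and rann: "\<forall>t. l < t \<and> t \<le> j \<longrightarrow> coeff (r * S) t = 0"
    and rmin: "\<forall>f. f \<noteq> 0 \<and> is_annihilator j s f \<longrightarrow> l \<le> degree f"
    unfolding inv_def st S_def by auto
  have rho: "rho eps n s j = r" and ell: "ell eps n s j = l" by (simp_all add: rho_def ell_def st)
  have rp: "(r, l) \<in> Rp j s"
    unfolding Rp_def using r0 rdeg lj
  proof (clarsimp)
    fix t assume "Suc l \<le> t" "t \<le> j"
    thus "(\<Sum>k = 0..degree r. coeff r k * s (t - k)) = 0"
      using Rp_sum_eq[of r t n s] rann rdeg jn by (simp add: S_def)
  qed
  define f where "f = monom 1 (l - degree r) * reflect_poly r"
  have r00: "r \<noteq> 0" using r0 by auto
  have f0: "f \<noteq> 0" using r00 by (simp add: f_def monom_eq_0_iff)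
  have fdeg: "degree f = l" unfolding f_def using r00 r0 rdeg
    by (subst degree_mult_eq) (auto simp: degree_monom_eq monom_eq_0_iff)
  have fref: "reflect_poly f = r" unfolding f_def using r0
    by (simp add: reflect_poly_mult reflect_monom1)
  have fann: "is_annihilator j s f"
    using annih_iff[OF f0 jn, of s] fref fdeg rann by (simp add: S_def)
  have fmin: "f \<in> MinSet j s" unfolding MinSet_def using f0 fann rmin fdeg by auto
  have lc: "l = Lc j s"
    unfolding Lc_def
  proof (rule Least_equality[symmetric])
    show "\<exists>f. f \<noteq> 0 \<and> is_annihilator j s f \<and> degree f = l" using f0 fann fdeg by blast
    show "\<And>y. \<exists>f. f \<noteq> 0 \<and> is_annihilator j s f \<and> degree f = y \<Longrightarrow> l \<le> y" using rmin by blast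
  qed
  show ?thesis using r0 rdeg rp fmin lc unfolding rho ell f_def by simp
qed

lemma part2:
  fixes eps :: "'a::idom"
  assumes jn: "Suc i \<le> n"
  shows "(Delta eps n s (Suc i) = 0 \<longrightarrow>
               ell eps n s (Suc i) = ell eps n s i \<and> ee eps n s (Suc i) = ee eps n s i + 1) \<and>
            (Delta eps n s (Suc i) \<noteq> 0 \<longrightarrow>
               int (ell eps n s (Suc i)) = max (ee eps n s i) 0 + int (ell eps n s i) \<and>
               int (ell eps n s (Suc i)) = jprime eps n s (Suc i) + 1 - int (ell_int eps n s (jprime eps n s (Suc i))) \<and>
               ee eps n s (Suc i) = - \<bar>ee eps n s i\<bar> + 1)"
proof -
  obtain r rp l jp dp where st: "bm_state eps n s i = (r, rp, l, jp, dp)"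
    by (metis prod_cases5)
  have I: "inv eps n s i" using jn by (intro inv_all) simp
  have I': "inv eps n s (Suc i)" using jn by (rule inv_all)
  have li: "l \<le> i" using I unfolding inv_def st by auto
  obtain r' rp' l' jp' dp' where st': "bm_state eps n s (Suc i) = (r', rp', l', jp', dp')"
    by (metis prod_cases5)
  have rel: "int l' = jp' + 1 - int (ell_int eps n s jp')" using I' unfolding inv_def st' by auto
  define dlt where "dlt = coeff_over r n s (Suc i)"
  have D: "Delta eps n s (Suc i) = dlt" by (simp add: Delta_def rho_def st dlt_def)
  have L: "l' = (if dlt \<noteq> 0 \<and> int i + 1 - 2 * int l > 0 then Suc i - l else l)"
    using st' by (simp add: st Let_def dlt_def)
  have E1: "ell eps n s i = l" "ell eps n s (Suc i) = l'" "jprime eps n s (Suc i) = jp'"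
    by (simp add: ell_def st) (simp_all only: ell_def jprime_def st' fst_conv snd_conv)
  show ?thesis
    unfolding D ee_def E1 using rel li L by (auto simp: max_def)
qed


theorem mainTheorem10:
  fixes eps :: "'a::idom" and s :: "nat \<Rightarrow> 'a" and n :: nat
  assumes "n \<ge> 1"
  shows "(\<forall>j\<le>n.
            coeff (rho eps n s j) 0 \<noteq> 0 \<and>
            degree (rho eps n s j) \<le> ell eps n s j \<and>
            (rho eps n s j, ell eps n s j) \<in> Rp j s \<and>
            monom 1 (ell eps n s j - degree (rho eps n s j)) * reflect_poly (rho eps n s j)
              \<in> MinSet j s \<and>
            ell eps n s j = Lc j s) \<and>
         (\<forall>j. 1 \<le> j \<and> j \<le> n \<longrightarrow>
            (Delta eps n s j = 0 \<longrightarrow>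
               ell eps n s j = ell eps n s (j - 1) \<and> ee eps n s j = ee eps n s (j - 1) + 1) \<and>
            (Delta eps n s j \<noteq> 0 \<longrightarrow>
               int (ell eps n s j) = max (ee eps n s (j - 1)) 0 + int (ell eps n s (j - 1)) \<and>
               int (ell eps n s j) = jprime eps n s j + 1 - int (ell_int eps n s (jprime eps n s j)) \<and>
               ee eps n s j = - \<bar>ee eps n s (j - 1)\<bar> + 1))"
  proof (intro conjI allI impI)
  fix j assume "j \<le> n"
  thus "coeff (rho eps n s j) 0 \<noteq> 0" "degree (rho eps n s j) \<le> ell eps n s j"
    "(rho eps n s j, ell eps n s j) \<in> Rp j s"
    "monom 1 (ell eps n s j - degree (rho eps n s j)) * reflect_poly (rho eps n s j) \<in> MinSet j s"
    "ell eps n s j = Lc j s" using part1 by blast+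
next
  fix j assume j: "1 \<le> j \<and> j \<le> n"
  then obtain i where ji: "j = Suc i" by (cases j) auto
  note P2 = part2[of i n eps s]
  have "Suc i \<le> n" using j ji by simp
  note P3 = P2[OF this]
  from P3 show "Delta eps n s j = 0 \<Longrightarrow> ell eps n s j = ell eps n s (j - 1)"
    "Delta eps n s j = 0 \<Longrightarrow> ee eps n s j = ee eps n s (j - 1) + 1"
    "Delta eps n s j \<noteq> 0 \<Longrightarrow> int (ell eps n s j) = max (ee eps n s (j - 1)) 0 + int (ell eps n s (j - 1))"
    "Delta eps n s j \<noteq> 0 \<Longrightarrow> int (ell eps n s j) = jprime eps n s j + 1 - int (ell_int eps n s (jprime eps n s j))"
    "Delta eps n s j \<noteq> 0 \<Longrightarrow> ee eps n s j = - \<bar>ee eps n s (j - 1)\<bar> + 1"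
    unfolding ji by simp_all
qed

end
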